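(* Suppose $\{x[a_1,a_2]\}_{(a_1,a_2)\in\mathbb{Z}^2}\subset\mathcal{A}(P_1,P_2)$ is a collection such that each $x[a_1,a_2]$ is pointed at $(a_1,a_2)$, and such that $x[a_1,a_2]=z_1[a_1,a_2]$ for all $(a_1,a_2)\in\mathbb{Z}^2\setminus\mathbb{Z}_{>0}^2$. Then $\{x[a_1,a_2]\}_{(a_1,a_2)\in\mathbb{Z}^2}$ is a $\underline\Bbbk$-basis of $\mathcal{A}(P_1,P_2)$.
   Context: $\Bbbk$ is an ordered field and $P_1,P_2\in\Bbbk[z]$ are monic palindromic polynomials with coefficients in the positive cone (palindromic: $P(z)=z^dP(z^{-1})$ for $d=\deg P$). With $x_1,x_2$ commuting indeterminates, define $x_k\in\Bbbk(x_1,x_2)$ for all $k\in\mathbb{Z}$ by $x_{k+1}x_{k-1}=P_1(x_k)$ if $k$ is even and $x_{k+1}x_{k-1}=P_2(x_k)$ if $k$ is odd. $\underline\Bbbk$ is the $\mathbb{Z}$-subalgebra of $\Bbbk$ generated by the coefficients of $P_1,P_2$; $\mathcal{A}(P_1,P_2)$ is the $\underline\Bbbk$-subalgebra of $\Bbbk(x_1,x_2)$ generated by all $x_k$. An element $x\in\underline\Bbbk[x_1^{\pm1},x_2^{\pm1}]$ is pointed at $(a_1,a_2)$ if $x=x_1^{-a_1}x_2^{-a_2}\sum_{p,q\ge0}c(p,q)x_1^px_2^q$ with $c(p,q)\in\underline\Bbbk$ and $c(0,0)=1$. The standard monomial is $z_1[a_1,a_2]=x_0^{[a_2]_+}x_1^{[-a_1]_+}x_2^{[-a_2]_+}x_3^{[a_1]_+}$,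 with $[a]_+=\max(a,0)$. *)

theory Defs
  imports "HOL-Computational_Algebra.Polynomial" "HOL-Computational_Algebra.Fraction_Field"
begin

text \<open>Bivariate polynomials k[x1,x2] are modelled as 'k poly poly (inner variable x1,
outer variable x2); the rational function field k(x1,x2) is their fraction field.\<close>

type_synonym 'k ratfun = "'k poly poly fract"

definition emb :: "'k::linordered_field \<Rightarrow> 'k ratfun" where
  "emb c = Fract [:[:c:]:] 1"

definition X1 :: "'k::linordered_field ratfun" where
  "X1 = Fract [:[:0, 1:]:] 1"

definition X2 :: "'k::linordered_field ratfun" where
  "X2 = Fract [:0, 1:] 1"

definition evalP :: "'k::linordered_field poly \<Rightarrow> 'k ratfun \<Rightarrow> 'k ratfun" where
  "evalP P y = poly (map_poly emb P) y"

definition Pk :: "'k::linordered_field poly \<Rightarrow> 'k poly \<Rightarrow> int \<Rightarrow> 'k poly" where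
  "Pk P1 P2 k = (if even k then P1 else P2)"

text \<open>fwd n = (x_(n+1), x_(n+2)); recurrence x_(k+1) = P(x_k) / x_(k-1) with k = n+2.\<close>
fun fwd :: "'k::linordered_field poly \<Rightarrow> 'k poly \<Rightarrow> nat \<Rightarrow> 'k ratfun \<times> 'k ratfun" where
  "fwd P1 P2 0 = (X1, X2)"
| "fwd P1 P2 (Suc n) =
     (let (a, b) = fwd P1 P2 n in (b, evalP (Pk P1 P2 (int n + 2)) b / a))"

text \<open>bwd n = (x_(1-n), x_(2-n)); recurrence x_(k-1) = P(x_k) / x_(k+1) with k = 1-n.\<close>
fun bwd :: "'k::linordered_field poly \<Rightarrow> 'k poly \<Rightarrow> nat \<Rightarrow> 'k ratfun \<times> 'k ratfun" where
  "bwd P1 P2 0 = (X1, X2)"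
| "bwd P1 P2 (Suc n) =
     (let (a, b) = bwd P1 P2 n in (evalP (Pk P1 P2 (1 - int n)) a / b, a))"

definition xk :: "'k::linordered_field poly \<Rightarrow> 'k poly \<Rightarrow> int \<Rightarrow> 'k ratfun" where
  "xk P1 P2 k = (if k \<ge> 1 then fst (fwd P1 P2 (nat (k - 1))) else fst (bwd P1 P2 (nat (1 - k))))"

inductive_set kk :: "'k::linordered_field poly \<Rightarrow> 'k poly \<Rightarrow> 'k set" for P1 P2 where
  one: "1 \<in> kk P1 P2"
| coeff1: "coeff P1 i \<in> kk P1 P2"
| coeff2: "coeff P2 i \<in> kk P1 P2"
| add: "a \<in> kk P1 P2 \<Longrightarrow> b \<in> kk P1 P2 \<Longrightarrow> a + b \<in> kk P1 P2"
| neg: "a \<in> kk P1 P2 \<Longrightarrow> - a \<in> kk P1 P2"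
| mult: "a \<in> kk P1 P2 \<Longrightarrow> b \<in> kk P1 P2 \<Longrightarrow> a * b \<in> kk P1 P2"

inductive_set clalg :: "'k::linordered_field poly \<Rightarrow> 'k poly \<Rightarrow> 'k ratfun set" for P1 P2 where
  scal: "c \<in> kk P1 P2 \<Longrightarrow> emb c \<in> clalg P1 P2"
| var: "xk P1 P2 k \<in> clalg P1 P2"
| add: "a \<in> clalg P1 P2 \<Longrightarrow> b \<in> clalg P1 P2 \<Longrightarrow> a + b \<in> clalg P1 P2"
| mult: "a \<in> clalg P1 P2 \<Longrightarrow> b \<in> clalg P1 P2 \<Longrightarrow> a * b \<in> clalg P1 P2"

definition pointed :: "'k::linordered_field poly \<Rightarrow> 'k poly \<Rightarrow> 'k ratfun \<Rightarrow> int \<Rightarrow> int \<Rightarrow> bool" where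
  "pointed P1 P2 x a1 a2 \<longleftrightarrow>
     (\<exists>(c :: nat \<Rightarrow> nat \<Rightarrow> 'k) (N :: nat).
        (\<forall>p q. c p q \<in> kk P1 P2) \<and> c 0 0 = 1 \<and>
        x = X1 powi (- a1) * X2 powi (- a2) *
            (\<Sum>p\<le>N. \<Sum>q\<le>N. emb (c p q) * X1 ^ p * X2 ^ q))"

definition z1 :: "'k::linordered_field poly \<Rightarrow> 'k poly \<Rightarrow> int \<Rightarrow> int \<Rightarrow> 'k ratfun" where
  "z1 P1 P2 a1 a2 =
     xk P1 P2 0 ^ nat a2 * xk P1 P2 1 ^ nat (- a1) * xk P1 P2 2 ^ nat (- a2) * xk P1 P2 3 ^ nat a1"

definition is_basis ::
  "'k::linordered_field set \<Rightarrow> 'k ratfun set \<Rightarrow> 'i set \<Rightarrow> ('i \<Rightarrow> 'k ratfun) \<Rightarrow> bool" where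
  "is_basis R M I f \<longleftrightarrow>
     (\<forall>i\<in>I. f i \<in> M) \<and>
     (\<forall>y\<in>M. \<exists>S c. finite S \<and> S \<subseteq> I \<and> (\<forall>i\<in>S. c i \<in> R) \<and>
                   y = (\<Sum>i\<in>S. emb (c i) * f i)) \<and>
     (\<forall>S c. finite S \<and> S \<subseteq> I \<and> (\<forall>i\<in>S. c i \<in> R) \<and> (\<Sum>i\<in>S. emb (c i) * f i) = 0
            \<longrightarrow> (\<forall>i\<in>S. c i = 0))"

end

theory Submission
  imports Defs
begin


lemma poly_pos_const: "0 < [:c::'a::linordered_idom:] \<longleftrightarrow> 0 < c"
  by (simp add: less_poly_def pos_poly_pCons)
lemma poly_pos_lin: "0 < [:0, c::'a::linordered_idom:] \<longleftrightarrow> 0 < c"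
  by (simp add: less_poly_def pos_poly_pCons)

lemma X1_pos: "(0::'k::linordered_field ratfun) < X1"
  unfolding X1_def by (simp add: zero_less_Fract_iff poly_pos_const poly_pos_lin)
lemma X2_pos: "(0::'k::linordered_field ratfun) < X2"
  unfolding X2_def by (simp add: zero_less_Fract_iff poly_pos_const poly_pos_lin)
lemma emb_nonneg: "0 \<le> c \<Longrightarrow> (0::'k::linordered_field ratfun) \<le> emb c"
  unfolding emb_def by (subst zero_le_Fract_iff) (auto simp add: le_less poly_pos_const)
lemma emb_0[simp]: "emb 0 = 0" unfolding emb_def by (simp add: Zero_fract_def)
lemma emb_1[simp]: "emb 1 = 1" unfolding emb_def by (simp add: One_fract_def one_pCons)
lemma emb_add: "emb (a+b) = emb a + emb b" unfolding emb_def by simp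
lemma emb_mult: "emb (a*b) = emb a * emb b" unfolding emb_def by simp
lemma emb_minus: "emb (-a) = - emb a" unfolding emb_def by simp
lemma emb_eq0: "emb c = 0 \<longleftrightarrow> c = 0" unfolding emb_def by (simp add: Zero_fract_def eq_fract)


lemma evalP_sum: "evalP P y = (\<Sum>i\<le>degree P. emb (coeff P i) * y^i)"
proof -
  have d: "degree (map_poly emb P) = degree P"
    by (rule degree_map_poly) (simp add: emb_eq0)
  show ?thesis unfolding evalP_def poly_altdef d by (simp add: coeff_map_poly)
qed

lemma coeff0_pal: assumes "lead_coeff P = 1" "reflect_poly P = P" shows "coeff P 0 = 1"
  using assms coeff_reflect_poly[of P 0] by simp

lemma evalP_pos:
  assumes "\<forall>i. coeff P i \<ge> 0" "coeff P 0 = 1" "(0::'k::linordered_field ratfun) < y"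
  shows "0 < evalP P y"
proof -
  have "(\<lambda>i. emb (coeff P i) * y^i) 0 \<le> (\<Sum>i\<le>degree P. emb (coeff P i) * y^i)"
    by (rule member_le_sum) (use assms in \<open>auto intro!: mult_nonneg_nonneg emb_nonneg\<close>)
  then show ?thesis using assms by (simp add: evalP_sum)
qed

lemma fwd_Suc: "fst (fwd P1 P2 (Suc n)) = snd (fwd P1 P2 n)"
  "snd (fwd P1 P2 (Suc n)) = evalP (Pk P1 P2 (int n + 2)) (snd (fwd P1 P2 n)) / fst (fwd P1 P2 n)"
  by (simp_all add: split_beta)
lemma bwd_Suc: "snd (bwd P1 P2 (Suc n)) = fst (bwd P1 P2 n)"
  "fst (bwd P1 P2 (Suc n)) = evalP (Pk P1 P2 (1 - int n)) (fst (bwd P1 P2 n)) / snd (bwd P1 P2 n)"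
  by (simp_all add: split_beta)

lemma xk_fwd: "xk P1 P2 (int n + 1) = fst (fwd P1 P2 n)" unfolding xk_def by simp
lemma xk_fwd2: "xk P1 P2 (int n + 2) = snd (fwd P1 P2 n)"
  using xk_fwd[of P1 P2 "Suc n"] fwd_Suc(1)[of P1 P2 n] by (simp add: add.commute)
lemma xk_bwd: "xk P1 P2 (1 - int n) = fst (bwd P1 P2 n)"
proof (cases n)
  case (Suc m)
  have "nat (1 + int m) = Suc m" by simp
  then show ?thesis unfolding xk_def using Suc by (simp del: bwd.simps)
qed (simp add: xk_def)
lemma xk_bwd2: "xk P1 P2 (2 - int n) = snd (bwd P1 P2 n)"
proof (cases n)
  case 0 then show ?thesis using xk_fwd2[of P1 P2 0] by simp
next
  case (Suc m) then show ?thesis using xk_bwd[of P1 P2 m] bwd_Suc(1)[of P1 P2 m] by simp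
qed

locale setting =
  fixes P1 P2 :: "'k::linordered_field poly"
  assumes l1: "lead_coeff P1 = 1" and l2: "lead_coeff P2 = 1"
    and r1: "reflect_poly P1 = P1" and r2: "reflect_poly P2 = P2"
    and n1: "\<forall>i. coeff P1 i \<ge> 0" and n2: "\<forall>i. coeff P2 i \<ge> 0"
begin

lemma Pk_prop: "lead_coeff (Pk P1 P2 k) = 1 \<and> reflect_poly (Pk P1 P2 k) = Pk P1 P2 k
   \<and> (\<forall>i. coeff (Pk P1 P2 k) i \<ge> 0) \<and> coeff (Pk P1 P2 k) 0 = 1"
  unfolding Pk_def using l1 l2 r1 r2 n1 n2 coeff0_pal[of P1] coeff0_pal[of P2] by auto

lemma fwd_pos: "0 < fst (fwd P1 P2 n) \<and> 0 < snd (fwd P1 P2 n)"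
proof (induction n)
  case 0 then show ?case by (simp add: X1_pos X2_pos)
next
  case (Suc n) then show ?case using Pk_prop
    by (simp only: fwd_Suc) (auto intro!: divide_pos_pos evalP_pos)
qed

lemma bwd_pos: "0 < fst (bwd P1 P2 n) \<and> 0 < snd (bwd P1 P2 n)"
proof (induction n)
  case 0 then show ?case by (simp add: X1_pos X2_pos)
next
  case (Suc n) then show ?case using Pk_prop
    by (simp only: bwd_Suc) (auto intro!: divide_pos_pos evalP_pos)
qed

lemma xk_pos: "0 < xk P1 P2 k"
  unfolding xk_def using fwd_pos bwd_pos by auto

lemma xk_rec: "xk P1 P2 (k+1) * xk P1 P2 (k-1) = evalP (Pk P1 P2 k) (xk P1 P2 k)"
proof (cases "k \<ge> 2")
  case True
  define n where "n = nat (k - 2)"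
  have k: "k = int n + 2" using True n_def by simp
  have a: "xk P1 P2 (k+1) = snd (fwd P1 P2 (Suc n))"
    using xk_fwd2[of P1 P2 "Suc n"] k by (simp add: add.commute add.left_commute)
  have b: "xk P1 P2 (k-1) = fst (fwd P1 P2 n)" using xk_fwd[of P1 P2 n] k by (simp add: add.commute)
  have c: "xk P1 P2 k = snd (fwd P1 P2 n)" using xk_fwd2[of P1 P2 n] k by simp
  show ?thesis unfolding a b c fwd_Suc using fwd_pos[of n] by (simp add: k)
next
  case False
  define n where "n = nat (1 - k)"
  have k: "k = 1 - int n" using False n_def by simp
  have a: "xk P1 P2 (k-1) = fst (bwd P1 P2 (Suc n))"
    using xk_bwd[of P1 P2 "Suc n"] k by simp
  have b: "xk P1 P2 (k+1) = snd (bwd P1 P2 n)" using xk_bwd2[of P1 P2 n] k by simp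
  have c: "xk P1 P2 k = fst (bwd P1 P2 n)" using xk_bwd[of P1 P2 n] k by simp
  show ?thesis unfolding a b c bwd_Suc using bwd_pos[of n] by (simp add: k)
qed

end


lemma kk0: "0 \<in> kk P1 P2"
  using kk.add[OF kk.one kk.neg[OF kk.one]] by simp
lemma kkm1: "-1 \<in> kk P1 P2" by (rule kk.neg[OF kk.one])

inductive_set algS :: "'k::linordered_field poly \<Rightarrow> 'k poly \<Rightarrow> 'k ratfun set \<Rightarrow> 'k ratfun set"
  for P1 P2 G where
  sc: "c \<in> kk P1 P2 \<Longrightarrow> emb c \<in> algS P1 P2 G"
| gen: "g \<in> G \<Longrightarrow> g \<in> algS P1 P2 G"
| add: "a \<in> algS P1 P2 G \<Longrightarrow> b \<in> algS P1 P2 G \<Longrightarrow> a + b \<in> algS P1 P2 G"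
| mult: "a \<in> algS P1 P2 G \<Longrightarrow> b \<in> algS P1 P2 G \<Longrightarrow> a * b \<in> algS P1 P2 G"

lemma algS_1: "1 \<in> algS P1 P2 G" using algS.sc[OF kk.one] by simp
lemma algS_0: "0 \<in> algS P1 P2 G" using algS.sc[OF kk0] by simp
lemma algS_neg: "a \<in> algS P1 P2 G \<Longrightarrow> - a \<in> algS P1 P2 G"
  using algS.mult[OF algS.sc[OF kkm1]] by (simp add: emb_minus)
lemma algS_diff: "a \<in> algS P1 P2 G \<Longrightarrow> b \<in> algS P1 P2 G \<Longrightarrow> a - b \<in> algS P1 P2 G"
  using algS.add[OF _ algS_neg] by simp
lemma algS_pow: "a \<in> algS P1 P2 G \<Longrightarrow> a ^ n \<in> algS P1 P2 G"
  by (induction n) (auto intro: algS_1 algS.mult)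
lemma algS_sum: "(\<And>i. i \<in> S \<Longrightarrow> f i \<in> algS P1 P2 G) \<Longrightarrow> sum f S \<in> algS P1 P2 G"
  by (induction S rule: infinite_finite_induct) (auto intro: algS_0 algS.add)
lemma algS_evalP: "a \<in> algS P1 P2 G \<Longrightarrow> (\<forall>i. coeff P i \<in> kk P1 P2) \<Longrightarrow> evalP P a \<in> algS P1 P2 G"
  unfolding evalP_sum by (auto intro!: algS_sum algS.mult algS.sc algS_pow)
lemma algS_sub: "G' \<subseteq> algS P1 P2 G \<Longrightarrow> algS P1 P2 G' \<subseteq> algS P1 P2 G"
proof
  fix y assume "G' \<subseteq> algS P1 P2 G" "y \<in> algS P1 P2 G'"
  then show "y \<in> algS P1 P2 G" by (induction rule: algS.induct[OF \<open>y \<in> _\<close>]) (auto intro: algS.intros)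
qed

lemma exch_identity:
  fixes w0 w1 w2 w3 w4 :: "'k::linordered_field ratfun"
  assumes e0: "w0*w2 = evalP A w1" and e1: "w1*w3 = evalP (pCons 1 B') w2"
    and e2: "w2*w4 = evalP A w3" and nz: "w2 \<noteq> 0" and pal: "reflect_poly A = A"
  shows "w4 = w0 * w3 ^ degree A - evalP B' w2 *
     (\<Sum>i\<in>{0..degree A}. emb (coeff A i) * w3^i * (\<Sum>l<degree A - i. (w1*w3)^l))"
proof -
  define d where "d = degree A"
  define p where "p = coeff A"
  define t where "t = w1 * w3"
  define e where "e = evalP B' w2"
  have pd: "p (d - i) = p i" if "i \<le> d" for i
    using coeff_reflect_poly[of A i] that pal unfolding p_def d_def by simp
  have t: "t = 1 + w2 * e" unfolding t_def e_def e1 evalP_def by (simp add: map_poly_pCons)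
  have sA: "evalP A y = (\<Sum>i\<in>{0..d}. emb (p i) * y^i)" for y
    unfolding evalP_sum d_def p_def by (simp add: atLeast0AtMost)
  have "evalP A w1 * w3^d = (\<Sum>i\<in>{0..d}. emb (p i) * w1^i * w3^d)"
    unfolding sA by (simp add: sum_distrib_right)
  also have "\<dots> = (\<Sum>i\<in>{0..d}. emb (p (d - i)) * w1^(d-i) * w3^d)"
    by (subst sum.atLeastAtMost_rev) simp
  also have "\<dots> = (\<Sum>i\<in>{0..d}. emb (p i) * w3^i * t^(d-i))"
  proof (rule sum.cong[OF refl])
    fix i assume "i \<in> {0..d}"
    then have i: "i \<le> d" by simp
    have "w3^d = w3^i * w3^(d-i)" using i by (simp add: power_add[symmetric])
    then show "emb (p (d - i)) * w1^(d-i) * w3^d = emb (p i) * w3^i * t^(d-i)"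
      using pd[OF i] by (simp add: t_def power_mult_distrib)
  qed
  finally have s1: "evalP A w1 * w3^d = (\<Sum>i\<in>{0..d}. emb (p i) * w3^i * t^(d-i))" .
  have "evalP A w3 - evalP A w1 * w3^d = (\<Sum>i\<in>{0..d}. emb (p i) * w3^i * (1 - t^(d-i)))"
    unfolding s1 unfolding sA by (simp add: sum_subtractf[symmetric] algebra_simps)
  also have "\<dots> = (\<Sum>i\<in>{0..d}. emb (p i) * w3^i * ((1 - t) * (\<Sum>l<d-i. t^l)))"
    by (simp add: one_diff_power_eq)
  also have "\<dots> = - w2 * (e * (\<Sum>i\<in>{0..d}. emb (p i) * w3^i * (\<Sum>l<d-i. t^l)))"
    unfolding t by (simp add: sum_distrib_left algebra_simps)
  finally have "w2 * w4 - w0 * w2 * w3^d = w2 * (- e * (\<Sum>i\<in>{0..d}. emb (p i) * w3^i * (\<Sum>l<d-i. t^l)))"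
    using e0 e2 by simp
  then have "w2 * (w4 - w0 * w3^d) = w2 * (- e * (\<Sum>i\<in>{0..d}. emb (p i) * w3^i * (\<Sum>l<d-i. t^l)))"
    by (simp add: algebra_simps)
  then have "w4 - w0 * w3^d = - e * (\<Sum>i\<in>{0..d}. emb (p i) * w3^i * (\<Sum>l<d-i. t^l))"
    using mult_left_cancel[OF nz] by blast
  then show ?thesis unfolding d_def p_def t_def e_def by (simp add: algebra_simps)
qed

lemma exch:
  fixes w0 w1 w2 w3 w4 :: "'k::linordered_field ratfun"
  assumes e0: "w0*w2 = evalP A w1" and e1: "w1*w3 = evalP B w2"
    and e2: "w2*w4 = evalP A w3" and nz: "w2 \<noteq> 0" and pal: "reflect_poly A = A"
    and kA: "\<forall>i. coeff A i \<in> kk P1 P2" and kB: "\<forall>i. coeff B i \<in> kk P1 P2" and B0: "coeff B 0 = 1"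
    and g: "w0 \<in> algS P1 P2 G" "w1 \<in> algS P1 P2 G" "w2 \<in> algS P1 P2 G" "w3 \<in> algS P1 P2 G"
  shows "w4 \<in> algS P1 P2 G"
proof -
  obtain a B' where B: "B = pCons a B'" by (cases B)
  with B0 have a: "a = 1" by simp
  have kB': "\<forall>i. coeff B' i \<in> kk P1 P2" using kB B by (metis coeff_pCons_Suc)
  have "w4 = w0 * w3 ^ degree A - evalP B' w2 *
     (\<Sum>i\<in>{0..degree A}. emb (coeff A i) * w3^i * (\<Sum>l<degree A - i. (w1*w3)^l))"
    by (rule exch_identity[OF e0 _ e2 nz pal]) (use e1 B a in simp)
  also have "\<dots> \<in> algS P1 P2 G"
    using g kA kB' by (auto intro!: algS_diff algS.mult algS_pow algS_evalP algS_sum algS.sc)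
  finally show ?thesis .
qed



context setting begin

abbreviation "x k \<equiv> xk P1 P2 k"
definition "Y j = {x j, x (j+1), x (j+2), x (j+3)}"

lemma Pk_kk: "coeff (Pk P1 P2 k) i \<in> kk P1 P2"
  unfolding Pk_def by (auto intro: kk.coeff1 kk.coeff2)
lemma Pk_2: "Pk P1 P2 (k+2) = Pk P1 P2 k"
  unfolding Pk_def by simp

lemma rec': "x (k - 1) * x (k + 1) = evalP (Pk P1 P2 k) (x k)"
  using xk_rec[of k] by (simp add: mult.commute)

lemma rec2: "a = k - 1 \<Longrightarrow> b = k + 1 \<Longrightarrow> x a * x b = evalP (Pk P1 P2 k) (x k)"
  using rec' by simp
lemma rec3: "a = k + 1 \<Longrightarrow> b = k - 1 \<Longrightarrow> x a * x b = evalP (Pk P1 P2 k) (x k)"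
  using rec' by (simp add: mult.commute)

lemma step_fwd: "x (j+4) \<in> algS P1 P2 (Y j)"
proof (rule exch[where A="Pk P1 P2 (j+1)" and B = "Pk P1 P2 (j+2)"])
  show "x j * x (j+2) = evalP (Pk P1 P2 (j+1)) (x (j+1))" by (rule rec2) simp_all
  show "x (j+1) * x (j+3) = evalP (Pk P1 P2 (j+2)) (x (j+2))" by (rule rec2) simp_all
  show "x (j+2) * x (j+4) = evalP (Pk P1 P2 (j+1)) (x (j+3))" using rec2[of "j+2" "j+3" "j+4"] Pk_2[of "j+1"] by (simp add: add.assoc)
  show "x (j+2) \<noteq> 0" using xk_pos[of "j+2"] by simp
qed (use Pk_prop Pk_kk in \<open>auto simp: Y_def intro: algS.gen\<close>)

lemma step_bwd: "x j \<in> algS P1 P2 (Y (j+1))"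
proof (rule exch[where A="Pk P1 P2 (j+3)" and B = "Pk P1 P2 (j+2)" and ?w1.0 = "x (j+3)" and ?w3.0 = "x (j+1)"])
  show "x (j+4) * x (j+2) = evalP (Pk P1 P2 (j+3)) (x (j+3))" by (rule rec3) simp_all
  show "x (j+3) * x (j+1) = evalP (Pk P1 P2 (j+2)) (x (j+2))" by (rule rec3) simp_all
  show "x (j+2) * x j = evalP (Pk P1 P2 (j+3)) (x (j+1))" using rec3[of "j+2" "j+1" j] Pk_2[of "j+1"] by (simp add: add.assoc)
  show "x (j+2) \<noteq> 0" using xk_pos[of "j+2"] by simp
qed (use Pk_prop Pk_kk in \<open>auto simp: Y_def intro: algS.gen simp: add.assoc\<close>)

lemma step_eq: "algS P1 P2 (Y (j+1)) = algS P1 P2 (Y j)"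
proof
  show "algS P1 P2 (Y (j+1)) \<subseteq> algS P1 P2 (Y j)"
    by (rule algS_sub) (use step_fwd[of j] in \<open>auto simp: Y_def add.assoc intro: algS.gen\<close>)
  show "algS P1 P2 (Y j) \<subseteq> algS P1 P2 (Y (j+1))"
    by (rule algS_sub) (use step_bwd[of j] in \<open>auto simp: Y_def add.assoc intro: algS.gen\<close>)
qed

lemma Y_all: "algS P1 P2 (Y j) = algS P1 P2 (Y 0)"
proof (induction j rule: int_induct[where k=0])
  case (step1 i) then show ?case using step_eq[of i] by simp
next
  case (step2 i) then show ?case using step_eq[of "i - 1"] by simp
qed simp

lemma xk_in: "x k \<in> algS P1 P2 (Y 0)"
  using Y_all[of k] algS.gen[of "x k" "Y k" P1 P2] by (simp add: Y_def)

lemma clalg_sub: "clalg P1 P2 \<subseteq> algS P1 P2 (Y 0)"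
proof
  fix y assume "y \<in> clalg P1 P2" then show "y \<in> algS P1 P2 (Y 0)"
    by (induction rule: clalg.induct) (auto intro: algS.intros xk_in)
qed

end


definition spn :: "'k::linordered_field set \<Rightarrow> ('i \<Rightarrow> 'k ratfun) \<Rightarrow> 'k ratfun set" where
  "spn R F = {y. \<exists>S c. finite S \<and> (\<forall>i\<in>S. c i \<in> R) \<and> y = (\<Sum>i\<in>S. emb (c i) * F i)}"

lemma spnI: "finite S \<Longrightarrow> (\<forall>i\<in>S. c i \<in> R) \<Longrightarrow> y = (\<Sum>i\<in>S. emb (c i) * F i) \<Longrightarrow> y \<in> spn R F"
  unfolding spn_def by blast

lemma spn_0: "0 \<in> spn R F" by (rule spnI[of "{}"]) auto

lemma spn_gen: "1 \<in> R \<Longrightarrow> F i \<in> spn R F" by (rule spnI[of "{i}" "\<lambda>_. 1"]) auto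

lemma spn_add:
  assumes "0 \<in> R" "\<And>a b. a \<in> R \<Longrightarrow> b \<in> R \<Longrightarrow> a + b \<in> R"
    and "u \<in> spn R F" "v \<in> spn R F"
  shows "u + v \<in> spn R F"
proof -
  obtain S c where S: "finite S" "\<forall>i\<in>S. c i \<in> R" "u = (\<Sum>i\<in>S. emb (c i) * F i)"
    using assms(3) unfolding spn_def by blast
  obtain T d where T: "finite T" "\<forall>i\<in>T. d i \<in> R" "v = (\<Sum>i\<in>T. emb (d i) * F i)"
    using assms(4) unfolding spn_def by blast
  define e where "e i = (if i \<in> S then c i else 0) + (if i \<in> T then d i else 0)" for i
  have 1: "(\<Sum>i\<in>S\<union>T. emb (if i \<in> S then c i else 0) * F i) = u"
    unfolding S(3) by (rule sum.mono_neutral_cong_right) (use S T in auto)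
  have 2: "(\<Sum>i\<in>S\<union>T. emb (if i \<in> T then d i else 0) * F i) = v"
    unfolding T(3) by (rule sum.mono_neutral_cong_right) (use S T in auto)
  show ?thesis
  proof (rule spnI[of "S \<union> T" e])
    show "\<forall>i\<in>S \<union> T. e i \<in> R" using S T assms(1,2) by (auto simp: e_def)
    show "u + v = (\<Sum>i\<in>S \<union> T. emb (e i) * F i)"
      unfolding 1[symmetric] 2[symmetric] e_def emb_add by (simp add: sum.distrib distrib_right)
  qed (use S T in auto)
qed

lemma spn_smul:
  assumes "\<And>a b. a \<in> R \<Longrightarrow> b \<in> R \<Longrightarrow> a * b \<in> R" "a \<in> R" "u \<in> spn R F"
  shows "emb a * u \<in> spn R F"
proof -
  obtain S c where S: "finite S" "\<forall>i\<in>S. c i \<in> R" "u = (\<Sum>i\<in>S. emb (c i) * F i)"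
    using assms(3) unfolding spn_def by blast
  show ?thesis
    by (rule spnI[of S "\<lambda>i. a * c i"]) (use S assms in \<open>auto simp: sum_distrib_left emb_mult mult.assoc\<close>)
qed

context setting begin

abbreviation "K \<equiv> kk P1 P2"

lemma K_add: "a \<in> K \<Longrightarrow> b \<in> K \<Longrightarrow> a + b \<in> K" by (rule kk.add)
lemma K_mult: "a \<in> K \<Longrightarrow> b \<in> K \<Longrightarrow> a * b \<in> K" by (rule kk.mult)

lemma sadd: "u \<in> spn K F \<Longrightarrow> v \<in> spn K F \<Longrightarrow> u + v \<in> spn K F"
  by (rule spn_add[OF kk0 K_add])
lemma ssmul: "a \<in> K \<Longrightarrow> u \<in> spn K F \<Longrightarrow> emb a * u \<in> spn K F"
  by (rule spn_smul[OF K_mult])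
lemma sneg: "u \<in> spn K F \<Longrightarrow> - u \<in> spn K F"
  using ssmul[OF kkm1] by (simp add: emb_minus)
lemma sdiff: "u \<in> spn K F \<Longrightarrow> v \<in> spn K F \<Longrightarrow> u - v \<in> spn K F"
  using sadd[OF _ sneg] by simp
lemma sgen: "F i \<in> spn K F" by (rule spn_gen[OF kk.one])
lemma ssum: "(\<And>i. i \<in> S \<Longrightarrow> f i \<in> spn K F) \<Longrightarrow> sum f S \<in> spn K F"
  by (induction S rule: infinite_finite_induct) (auto intro: spn_0 sadd)
lemma strans: assumes "\<And>i. F i \<in> spn K G" shows "spn K F \<subseteq> spn K G"
proof
  fix y assume "y \<in> spn K F"
  then obtain S c where S: "finite S" "\<forall>i\<in>S. c i \<in> K" "y = (\<Sum>i\<in>S. emb (c i) * F i)"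
    unfolding spn_def by blast
  show "y \<in> spn K G" unfolding S(3) by (rule ssum) (use S assms in \<open>auto intro: ssmul\<close>)
qed

definition zz :: "int \<times> int \<Rightarrow> 'k ratfun" where "zz a = z1 P1 P2 (fst a) (snd a)"
definition mon :: "nat \<Rightarrow> nat \<Rightarrow> nat \<Rightarrow> nat \<Rightarrow> 'k ratfun" where
  "mon a b c d = x 0 ^ a * x 1 ^ b * x 2 ^ c * x 3 ^ d"

lemma zz_mon: "zz a = mon (nat (snd a)) (nat (- fst a)) (nat (- snd a)) (nat (fst a))"
  unfolding zz_def z1_def mon_def by simp

lemma mon_mult: "mon a b c d * mon a' b' c' d' = mon (a+a') (b+b') (c+c') (d+d')"
  unfolding mon_def by (simp add: power_add algebra_simps)

lemma mon_std: "a * c = 0 \<Longrightarrow> b * d = 0 \<Longrightarrow> mon a b c d = zz (int d - int b, int a - int c)"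
  unfolding zz_mon by auto

lemma mon_in: "mon a b c d \<in> spn K zz"
proof (induction "a + d" arbitrary: a b c d rule: less_induct)
  case less
  show ?case
  proof (cases "a > 0 \<and> c > 0")
    case True
    then obtain a' c' where ac: "a = Suc a'" "c = Suc c'" by (metis gr0_implies_Suc)
    have "mon a b c d = (x 0 * x 2) * mon a' b c' d"
      unfolding ac mon_def by (simp add: algebra_simps)
    also have "x 0 * x 2 = evalP (Pk P1 P2 1) (x 1)" by (rule rec2) simp_all
    also have "evalP (Pk P1 P2 1) (x 1) * mon a' b c' d
        = (\<Sum>i\<le>degree (Pk P1 P2 1). emb (coeff (Pk P1 P2 1) i) * mon a' (b+i) c' d)"
      unfolding evalP_sum sum_distrib_right by (rule sum.cong) (auto simp: mon_def power_add algebra_simps)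
    also have "\<dots> \<in> spn K zz"
      by (rule ssum, rule ssmul[OF Pk_kk], rule less) (use ac in simp)
    finally show ?thesis .
  next
    case F1: False
    show ?thesis
    proof (cases "b > 0 \<and> d > 0")
      case True
      then obtain b' d' where bd: "b = Suc b'" "d = Suc d'" by (metis gr0_implies_Suc)
      have "mon a b c d = (x 1 * x 3) * mon a b' c d'"
        unfolding bd mon_def by (simp add: algebra_simps)
      also have "x 1 * x 3 = evalP (Pk P1 P2 2) (x 2)" by (rule rec2) simp_all
      also have "evalP (Pk P1 P2 2) (x 2) * mon a b' c d'
          = (\<Sum>i\<le>degree (Pk P1 P2 2). emb (coeff (Pk P1 P2 2) i) * mon a b' (c+i) d')"
        unfolding evalP_sum sum_distrib_right by (rule sum.cong) (auto simp: mon_def power_add algebra_simps)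
      also have "\<dots> \<in> spn K zz"
        by (rule ssum, rule ssmul[OF Pk_kk], rule less) (use bd in simp)
      finally show ?thesis .
    next
      case False
      with F1 have "a * c = 0" "b * d = 0" by auto
      then show ?thesis using mon_std sgen by metis
    qed
  qed
qed

lemma zz_mult: "zz a * zz b \<in> spn K zz"
proof -
  have "zz a * zz b = mon (nat (snd a) + nat (snd b)) (nat (- fst a) + nat (- fst b))
      (nat (- snd a) + nat (- snd b)) (nat (fst a) + nat (fst b))"
    by (simp only: zz_mon mon_mult)
  then show ?thesis using mon_in by simp
qed

lemma smult_zz: assumes "u \<in> spn K zz" "v \<in> spn K zz" shows "u * v \<in> spn K zz"
proof -
  obtain S c where S: "finite S" "\<forall>i\<in>S. c i \<in> K" "u = (\<Sum>i\<in>S. emb (c i) * zz i)"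
    using assms(1) unfolding spn_def by blast
  obtain T d where T: "finite T" "\<forall>i\<in>T. d i \<in> K" "v = (\<Sum>i\<in>T. emb (d i) * zz i)"
    using assms(2) unfolding spn_def by blast
  have "u * v = (\<Sum>i\<in>S. \<Sum>j\<in>T. emb (c i * d j) * (zz i * zz j))"
    unfolding S(3) T(3) sum_product by (simp add: emb_mult algebra_simps)
  also have "\<dots> \<in> spn K zz"
    using S T by (auto intro!: ssum ssmul K_mult zz_mult)
  finally show ?thesis .
qed

lemma zz00: "zz (0,0) = 1" unfolding zz_def z1_def by simp

lemma clalg_spn: "clalg P1 P2 \<subseteq> spn K zz"
proof -
  have "algS P1 P2 (Y 0) \<subseteq> spn K zz"
  proof
    fix y assume "y \<in> algS P1 P2 (Y 0)"
    then show "y \<in> spn K zz"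
    proof (induction rule: algS.induct)
      case (sc c) then show ?case using ssmul[OF sc sgen[of zz "(0,0)"]] zz00 by simp
    next
      case (gen g)
      have "x 0 = zz (0,1)" "x 1 = zz (-1, 0)" "x 2 = zz (0,-1)" "x 3 = zz (1,0)"
        unfolding zz_def z1_def by simp_all
      then show ?case using gen sgen[of zz] by (auto simp: Y_def)
    qed (auto intro: sadd smult_zz)
  qed
  then show ?thesis using clalg_sub by blast
qed

end


definition icf :: "'k::linordered_field poly poly \<Rightarrow> int \<Rightarrow> int \<Rightarrow> 'k" where
  "icf f m1 m2 = (if 0 \<le> m1 \<and> 0 \<le> m2 then coeff (coeff f (nat m2)) (nat m1) else 0)"

definition sh :: "nat \<Rightarrow> nat \<Rightarrow> 'k::linordered_field poly poly \<Rightarrow> 'k poly poly" where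
  "sh s t f = smult (monom 1 s) (monom 1 t * f)"

definition LR :: "int \<Rightarrow> int \<Rightarrow> 'k::linordered_field poly poly \<Rightarrow> 'k ratfun" where
  "LR i j f = X1 powi i * X2 powi j * Fract f 1"

lemma Fract_pow: "Fract (a::'a::idom) 1 ^ n = Fract (a^n) 1"
  by (induction n) (simp_all add: One_fract_def)

lemma const_pow: "[:a::'a::comm_ring_1:] ^ n = [:a^n:]"
  by (induction n) simp_all

lemma icf_sh: "icf (sh s t f) m1 m2 = icf f (m1 - int s) (m2 - int t)"
proof (cases "0 \<le> m1 \<and> 0 \<le> m2")
  case True
  then obtain a b where ab: "m1 = int a" "m2 = int b" by (metis nonneg_int_cases)
  show ?thesis unfolding icf_def sh_def ab
    by (auto simp: coeff_monom_mult nat_diff_distrib not_less)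
qed (auto simp: icf_def)

lemma X1_ne: "X1 \<noteq> (0::'k::linordered_field ratfun)" by (metis X1_pos order_less_irrefl)
lemma X2_ne: "X2 \<noteq> (0::'k::linordered_field ratfun)" by (metis X2_pos order_less_irrefl)

lemma X_sh: "X1 ^ s * X2 ^ t * Fract f 1 = (Fract (sh s t f) 1 :: 'k::linordered_field ratfun)"
proof -
  have "X1 ^ s = (Fract [:monom 1 s:] 1 :: 'k ratfun)"
    unfolding X1_def Fract_pow const_pow monom_altdef by simp
  moreover have "X2 ^ t = (Fract (monom 1 t) 1 :: 'k ratfun)"
    unfolding X2_def Fract_pow monom_altdef by simp
  ultimately show ?thesis by (simp add: sh_def mult.assoc)
qed

lemma LR_shift:
  fixes f :: "'k::linordered_field poly poly"
  shows "LR i j f = LR (i - int s) (j - int t) (sh s t f)"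
proof -
  have "X1 powi i = X1 powi (i - int s) * (X1::'k ratfun) ^ s"
    using power_int_add[of "X1::'k ratfun" "i - int s" "int s"] by (simp add: X1_ne)
  moreover have "X2 powi j = X2 powi (j - int t) * (X2::'k ratfun) ^ t"
    using power_int_add[of "X2::'k ratfun" "j - int t" "int t"] by (simp add: X2_ne)
  ultimately show ?thesis unfolding LR_def X_sh[symmetric] by (simp add: ac_simps)
qed

lemma LR_unique:
  fixes f f' :: "'k::linordered_field poly poly"
  assumes "LR i j f = LR i' j' f'"
  shows "icf f (m1 - i) (m2 - j) = icf f' (m1 - i') (m2 - j')"
proof -
  define mi where "mi = min i i'"
  define mj where "mj = min j j'"
  define s where "s = nat (i - mi)"
  define s' where "s' = nat (i' - mi)"
  define t where "t = nat (j - mj)"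
  define t' where "t' = nat (j' - mj)"
  have e1: "LR i j f = LR mi mj (sh s t f)" using LR_shift[of i j f s t] by (simp add: s_def t_def mi_def mj_def)
  have e2: "LR i' j' f' = LR mi mj (sh s' t' f')" using LR_shift[of i' j' f' s' t'] by (simp add: s'_def t'_def mi_def mj_def)
  have "LR mi mj (sh s t f) = LR mi mj (sh s' t' f')" using assms e1 e2 by simp
  then have "Fract (sh s t f) 1 = (Fract (sh s' t' f') 1 :: 'k ratfun)"
    unfolding LR_def by (simp add: X1_ne X2_ne)
  then have eq: "sh s t f = sh s' t' f'" by (simp add: eq_fract)
  have "icf f (m1 - i) (m2 - j) = icf (sh s t f) (m1 - mi) (m2 - mj)"
    by (simp add: icf_sh s_def t_def mi_def mj_def)
  also have "\<dots> = icf (sh s' t' f') (m1 - mi) (m2 - mj)" by (simp add: eq)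
  also have "\<dots> = icf f' (m1 - i') (m2 - j')"
    by (simp add: icf_sh s'_def t'_def mi_def mj_def)
  finally show ?thesis .
qed

definition lcoef :: "'k::linordered_field ratfun \<Rightarrow> int \<Rightarrow> int \<Rightarrow> 'k" where
  "lcoef r m1 m2 = (THE v. \<exists>i j f. r = LR i j f \<and> v = icf f (m1 - i) (m2 - j))"

lemma lcoef_LR: "lcoef (LR i j f) m1 m2 = icf f (m1 - i) (m2 - j)"
  unfolding lcoef_def
  by (rule the_equality) (auto dest: LR_unique[where ?m1.0=m1 and ?m2.0=m2])

definition isL :: "'k::linordered_field ratfun \<Rightarrow> bool" where
  "isL r \<longleftrightarrow> (\<exists>i j f. r = LR i j f)"

lemma isL_0: "isL 0" and lcoef_0: "lcoef 0 m1 m2 = 0"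
proof -
  have z: "0 = LR 0 0 0" by (simp add: LR_def Zero_fract_def)
  show "isL 0" unfolding isL_def using z by blast
  show "lcoef 0 m1 m2 = 0" by (subst z) (simp add: lcoef_LR icf_def)
qed

lemma icf_add: "icf (f + g) m1 m2 = icf f m1 m2 + icf g m1 m2"
  by (simp add: icf_def)

lemma LR_common:
  assumes "isL r" "isL q"
  obtains i j f g where "r = LR i j f" "q = LR i j g"
proof -
  obtain i j f where r: "r = LR i j f" using assms unfolding isL_def by blast
  obtain i' j' g where q: "q = LR i' j' g" using assms unfolding isL_def by blast
  define mi where "mi = min i i'"
  define mj where "mj = min j j'"
  have "r = LR mi mj (sh (nat (i - mi)) (nat (j - mj)) f)"
    using r LR_shift[of i j f "nat (i - mi)" "nat (j - mj)"] by (simp add: mi_def mj_def)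
  moreover have "q = LR mi mj (sh (nat (i' - mi)) (nat (j' - mj)) g)"
    using q LR_shift[of i' j' g "nat (i' - mi)" "nat (j' - mj)"] by (simp add: mi_def mj_def)
  ultimately show ?thesis using that by blast
qed

lemma LR_add: "LR i j f + LR i j g = LR i j (f + g)"
proof -
  have "Fract f 1 + Fract g 1 = (Fract (f + g) 1 :: 'a::linordered_field ratfun)" by simp
  then show ?thesis unfolding LR_def by (metis distrib_left)
qed

lemma isL_add: "isL r \<Longrightarrow> isL q \<Longrightarrow> isL (r + q)"
  by (erule LR_common, assumption) (auto simp: isL_def LR_add)

lemma lcoef_add: "isL r \<Longrightarrow> isL q \<Longrightarrow> lcoef (r + q) m1 m2 = lcoef r m1 m2 + lcoef q m1 m2"
  by (erule LR_common, assumption) (simp add: LR_add lcoef_LR icf_add)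

lemma emb_LR: "emb c * LR i j f = LR i j (smult [:c:] f)"
  unfolding LR_def emb_def by (simp add: ac_simps)

lemma isL_smul: "isL r \<Longrightarrow> isL (emb c * r)"
  by (metis isL_def emb_LR)

lemma lcoef_smul: "isL r \<Longrightarrow> lcoef (emb c * r) m1 m2 = c * lcoef r m1 m2"
  by (auto simp: isL_def emb_LR lcoef_LR icf_def)

lemma isL_lsum: "(\<And>i. i \<in> S \<Longrightarrow> isL (F i)) \<Longrightarrow> isL (\<Sum>i\<in>S. emb (c i) * F i)"
  by (induction S rule: infinite_finite_induct) (auto intro: isL_0 isL_add isL_smul)

lemma lcoef_lsum: "(\<And>i. i \<in> S \<Longrightarrow> isL (F i)) \<Longrightarrow>
   lcoef (\<Sum>i\<in>S. emb (c i) * F i) m1 m2 = (\<Sum>i\<in>S. c i * lcoef (F i) m1 m2)"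
proof (induction S rule: infinite_finite_induct)
  case (insert a S)
  have "lcoef (\<Sum>i\<in>insert a S. emb (c i) * F i) m1 m2 = lcoef (emb (c a) * F a + (\<Sum>i\<in>S. emb (c i) * F i)) m1 m2"
    using insert by simp
  also have "\<dots> = c a * lcoef (F a) m1 m2 + lcoef (\<Sum>i\<in>S. emb (c i) * F i) m1 m2"
    using insert by (simp add: lcoef_add lcoef_smul isL_smul isL_lsum)
  finally show ?case using insert by simp
qed (auto simp: lcoef_0)



definition PT :: "'k::linordered_field ratfun \<Rightarrow> int \<times> int \<Rightarrow> bool" where
  "PT r a \<longleftrightarrow> (\<exists>f. coeff (coeff f 0) 0 = 1 \<and> r = LR (- fst a) (- snd a) f)"

lemma LR_mult:
  fixes f g :: "'k::linordered_field poly poly"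
  shows "LR i j f * LR i' j' g = LR (i+i') (j+j') (f*g)"
proof -
  have "(X1::'k ratfun) powi (i+i') = X1 powi i * X1 powi i'" by (simp add: power_int_add X1_ne)
  moreover have "(X2::'k ratfun) powi (j+j') = X2 powi j * X2 powi j'" by (simp add: power_int_add X2_ne)
  ultimately show ?thesis unfolding LR_def by (simp add: ac_simps)
qed

lemma PT_mult: "PT r a \<Longrightarrow> PT q b \<Longrightarrow> PT (r * q) (fst a + fst b, snd a + snd b)"
  unfolding PT_def
proof (elim exE conjE)
  fix f g assume *: "coeff (coeff f 0) 0 = 1" "r = LR (- fst a) (- snd a) f"
     "coeff (coeff g 0) 0 = 1" "q = LR (- fst b) (- snd b) g"
  show "\<exists>h. coeff (coeff h 0) 0 = 1 \<and> r * q = LR (- fst (fst a + fst b, snd a + snd b)) (- snd (fst a + fst b, snd a + snd b)) h"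
    by (rule exI[of _ "f*g"]) (simp add: * LR_mult coeff_mult_0)
qed

lemma PT_1: "PT 1 (0,0)"
  unfolding PT_def LR_def by (rule exI[of _ 1]) (simp add: One_fract_def)

lemma PT_pow: "PT r a \<Longrightarrow> PT (r ^ n) (int n * fst a, int n * snd a)"
proof (induction n)
  case 0 then show ?case using PT_1 by simp
next
  case (Suc n) then show ?case using PT_mult[OF Suc.prems Suc.IH[OF Suc.prems]] by (simp add: algebra_simps)
qed

lemma PT_lcoef:
  assumes "PT r a" "isL r"
  shows "lcoef r (- fst b) (- snd b) = (if b = a then 1 else if fst b \<le> fst a \<and> snd b \<le> snd a then lcoef r (- fst b) (- snd b) else 0)"
  using assms unfolding PT_def by (auto simp: lcoef_LR icf_def prod_eq_iff)

lemma PT_isL: "PT r a \<Longrightarrow> isL r" unfolding PT_def isL_def by blast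

lemma evalP_X1: "evalP P X1 = (Fract [:P:] 1 :: 'k::linordered_field ratfun)"
proof (induction P)
  case (pCons a p)
  have "evalP (pCons a p) X1 = emb a + X1 * evalP p X1"
    unfolding evalP_def by (simp add: map_poly_pCons)
  also have "\<dots> = Fract [:pCons a p:] 1" unfolding pCons.IH unfolding emb_def X1_def
    by simp
  finally show ?case .
qed (simp add: evalP_def Zero_fract_def)


lemma evalP_X2: "evalP P X2 = (Fract (map_poly (\<lambda>c. [:c:]) P) 1 :: 'k::linordered_field ratfun)"
proof (induction P)
  case (pCons a p)
  have "evalP (pCons a p) X2 = emb a + X2 * evalP p X2"
    unfolding evalP_def by (simp add: map_poly_pCons)
  also have "\<dots> = Fract (map_poly (\<lambda>c. [:c:]) (pCons a p)) 1" unfolding pCons.IH unfolding emb_def X2_def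
    by (simp add: map_poly_pCons)
  finally show ?case .
qed (simp add: evalP_def Zero_fract_def)

context setting begin

lemma x1_eq: "x 1 = X1" by (simp add: xk_def)
lemma x2_eq: "x 2 = X2" by (simp add: xk_def split_beta)

lemma PT_x0: "PT (x 0) (0, 1)"
proof -
  have e: "x 0 * X2 = evalP (Pk P1 P2 1) X1" using rec2[of 0 1 2] by (simp add: x1_eq x2_eq)
  have "x 0 = LR 0 (-1) [:Pk P1 P2 1:]"
    unfolding LR_def using e X2_ne[where 'k='k] by (simp add: evalP_X1[symmetric] power_int_minus field_simps)
  then show ?thesis unfolding PT_def using Pk_prop by (intro exI[of _ "[:Pk P1 P2 1:]"]) simp
qed

lemma PT_x3: "PT (x 3) (1, 0)"
proof -
  have e: "X1 * x 3 = evalP (Pk P1 P2 2) X2" using rec2[of 1 2 3] by (simp add: x1_eq x2_eq)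
  have "x 3 = LR (-1) 0 (map_poly (\<lambda>c. [:c:]) (Pk P1 P2 2))"
    unfolding LR_def using e X1_ne[where 'k='k] by (simp add: evalP_X2[symmetric] power_int_minus field_simps)
  then show ?thesis unfolding PT_def using Pk_prop
    by (intro exI[of _ "map_poly (\<lambda>c. [:c:]) (Pk P1 P2 2)"]) (simp add: coeff_map_poly)
qed

lemma PT_x1: "PT (x 1) (-1, 0)"
  unfolding PT_def LR_def x1_eq by (rule exI[of _ 1]) (simp add: One_fract_def)
lemma PT_x2: "PT (x 2) (0, -1)"
  unfolding PT_def LR_def x2_eq by (rule exI[of _ 1]) (simp add: One_fract_def)

lemma PT_mon: "PT (x 0 ^ n * x 1 ^ na * x 2 ^ nb * x 3 ^ nc) (int nc - int na, int n - int nb)"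
proof -
  have "PT (x 0 ^ n * x 1 ^ na * x 2 ^ nb * x 3 ^ nc)
     (int n * 0 + int na * (-1) + int nb * 0 + int nc * 1, int n * 1 + int na * 0 + int nb * (-1) + int nc * 0)"
    using PT_mult[OF PT_mult[OF PT_mult[OF PT_pow[OF PT_x0] PT_pow[OF PT_x1]] PT_pow[OF PT_x2]] PT_pow[OF PT_x3]]
    by (simp only: fst_conv snd_conv)
  then show ?thesis by simp
qed

lemma PT_zz: "PT (zz a) a"
proof -
  obtain a1 a2 where a: "a = (a1, a2)" by (cases a)
  have "(int (nat a1) - int (nat (- a1)), int (nat a2) - int (nat (- a2))) = a"
    using a by auto
  moreover have "zz a = x 0 ^ nat a2 * x 1 ^ nat (- a1) * x 2 ^ nat (- a2) * x 3 ^ nat a1"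
    unfolding zz_def z1_def a by simp
  ultimately show ?thesis using PT_mon by metis
qed

end


lemma fr_sum: "(Fract (sum f A) 1 :: 'a::idom fract) = (\<Sum>a\<in>A. Fract (f a) 1)"
proof (induction A rule: infinite_finite_induct)
  case (insert x F)
  have "Fract (f x + sum f F) 1 = Fract (f x) 1 + (Fract (sum f F) 1 :: 'a fract)" by simp
  then show ?case using insert by simp
qed (simp_all add: Zero_fract_def)

lemma sum_zero_pow: "(\<Sum>q\<le>N. g q * (0::'a::comm_semiring_1)^q) = g 0"
  by (induction N) auto

lemma pointed_PT:
  assumes "pointed P1 P2 r a1 a2" shows "PT r (a1, a2)"
proof -
  obtain c :: "nat \<Rightarrow> nat \<Rightarrow> 'a" and N where c: "c 0 0 = 1"
    and r: "r = X1 powi (- a1) * X2 powi (- a2) * (\<Sum>p\<le>N. \<Sum>q\<le>N. emb (c p q) * X1 ^ p * X2 ^ q)"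
    using assms unfolding pointed_def by blast
  define g where "g = (\<Sum>p\<le>N. \<Sum>q\<le>N. [:[:c p q:]:] * [:[:0,1:]:]^p * [:0,1:]^q)"
  have "(\<Sum>p\<le>N. \<Sum>q\<le>N. emb (c p q) * X1 ^ p * X2 ^ q) = (Fract g 1 :: 'a ratfun)"
    unfolding g_def fr_sum emb_def X1_def X2_def Fract_pow by simp
  then have r': "r = LR (- a1) (- a2) g" unfolding r LR_def by simp
  have "coeff (coeff g 0) 0 = poly (poly g 0) 0" by (simp add: poly_0_coeff_0)
  also have "\<dots> = (\<Sum>p\<le>N. \<Sum>q\<le>N. c p q * 0^p * 0^q)"
    unfolding g_def by (simp add: poly_sum mult.assoc)
  also have "\<dots> = c 0 0"
  proof -
    have "(\<Sum>p\<le>N. \<Sum>q\<le>N. c p q * 0^p * 0^q) = (\<Sum>p\<le>N. c p 0 * 0^p)"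
      by (rule sum.cong[OF refl]) (rule sum_zero_pow[of "\<lambda>q. c _ q * 0 ^ _"])
    then show ?thesis using sum_zero_pow[of "\<lambda>p. c p 0"] by simp
  qed
  finally show ?thesis unfolding PT_def using r' c by auto
qed


definition le2 :: "int \<times> int \<Rightarrow> int \<times> int \<Rightarrow> bool" where
  "le2 a b \<longleftrightarrow> fst a \<le> fst b \<and> snd a \<le> snd b"

lemma LR_diff: "LR i j f - LR i j g = LR i j (f - g)"
proof -
  have "Fract f 1 - Fract g 1 = (Fract (f - g) 1 :: 'a::linordered_field ratfun)" by simp
  then show ?thesis unfolding LR_def by (metis right_diff_distrib)
qed

lemma PT_at:
  assumes "PT r a" shows "lcoef r (- fst b) (- snd b) = (if b = a then 1 else if le2 b a then lcoef r (- fst b) (- snd b) else 0)"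
  using assms unfolding PT_def le2_def by (auto simp: lcoef_LR icf_def prod_eq_iff)

lemma key_max:
  assumes PTF: "\<And>b. PT (F b) b" and S: "finite S" "b \<in> S"
    and mx: "\<And>b'. b' \<in> S \<Longrightarrow> c b' \<noteq> 0 \<Longrightarrow> le2 b b' \<Longrightarrow> b' = b"
  shows "lcoef (\<Sum>i\<in>S. emb (c i) * F i) (- fst b) (- snd b) = c b"
proof -
  have L: "\<And>i. isL (F i)" using PTF PT_isL by blast
  have "lcoef (\<Sum>i\<in>S. emb (c i) * F i) (- fst b) (- snd b) = (\<Sum>i\<in>S. c i * lcoef (F i) (- fst b) (- snd b))"
    by (rule lcoef_lsum) (rule L)
  also have "\<dots> = c b * lcoef (F b) (- fst b) (- snd b) + (\<Sum>i\<in>S - {b}. c i * lcoef (F i) (- fst b) (- snd b))"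
    using S by (simp add: sum.remove)
  also have "(\<Sum>i\<in>S - {b}. c i * lcoef (F i) (- fst b) (- snd b)) = 0"
  proof (rule sum.neutral, rule ballI)
    fix i assume i: "i \<in> S - {b}"
    show "c i * lcoef (F i) (- fst b) (- snd b) = 0"
    proof (cases "c i = 0")
      case False
      then have "\<not> le2 b i" using mx i by blast
      moreover have "b \<noteq> i" using i by blast
      ultimately show ?thesis using PT_at[OF PTF[of i], of b] by simp
    qed simp
  qed
  also have "lcoef (F b) (- fst b) (- snd b) = 1" using PT_at[OF PTF[of b], of b] by simp
  finally show ?thesis by simp
qed

lemma exists_max:
  assumes "finite T" "T \<noteq> {}"
  obtains b where "b \<in> T" "\<And>b'. b' \<in> T \<Longrightarrow> le2 b b' \<Longrightarrow> b' = b"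
proof -
  have "Max ((\<lambda>a. fst a + snd a) ` T) \<in> (\<lambda>a. fst a + snd a) ` T" using assms by (intro Max_in) auto
  then obtain b where b: "b \<in> T" "fst b + snd b = Max ((\<lambda>a. fst a + snd a) ` T)"
    by (metis (no_types, lifting) imageE)
  have "b' = b" if "b' \<in> T" "le2 b b'" for b'
  proof -
    have "fst b' + snd b' \<le> fst b + snd b" using b(2) Max_ge[of "(\<lambda>a. fst a + snd a) ` T"] assms that by auto
    then show ?thesis using that(2) unfolding le2_def by (auto simp: prod_eq_iff)
  qed
  then show ?thesis using that b by blast
qed

lemma indep:
  assumes PTF: "\<And>b. PT (F b) b" and S: "finite S" and z: "(\<Sum>i\<in>S. emb (c i) * F i) = 0"
  shows "\<forall>i\<in>S. c i = 0"
proof (rule ccontr)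
  assume "\<not> (\<forall>i\<in>S. c i = 0)"
  then have ne: "{i \<in> S. c i \<noteq> 0} \<noteq> {}" by blast
  obtain b where b: "b \<in> {i \<in> S. c i \<noteq> 0}" "\<And>b'. b' \<in> {i \<in> S. c i \<noteq> 0} \<Longrightarrow> le2 b b' \<Longrightarrow> b' = b"
    using exists_max[OF _ ne] S by auto
  have "lcoef (\<Sum>i\<in>S. emb (c i) * F i) (- fst b) (- snd b) = c b"
    by (rule key_max[OF PTF S]) (use b in auto)
  then show False using z b(1) by (simp add: lcoef_0)
qed

lemma triang:
  assumes PTF: "\<And>b. PT (F b) b" and S: "finite S" and Pa: "PT u a"
    and e: "u - F a = (\<Sum>i\<in>S. emb (c i) * F i)"
  shows "\<forall>b\<in>S. c b \<noteq> 0 \<longrightarrow> le2 b a \<and> b \<noteq> a"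
proof (rule ccontr)
  assume "\<not> ?thesis"
  then obtain b0 where b0: "b0 \<in> S" "c b0 \<noteq> 0" "\<not> (le2 b0 a \<and> b0 \<noteq> a)" by blast
  have "b0 \<in> {i \<in> S. c i \<noteq> 0 \<and> le2 b0 i}" using b0 by (simp add: le2_def)
  then have ne: "{i \<in> S. c i \<noteq> 0 \<and> le2 b0 i} \<noteq> {}" by blast
  obtain b where b: "b \<in> {i \<in> S. c i \<noteq> 0 \<and> le2 b0 i}"
     "\<And>b'. b' \<in> {i \<in> S. c i \<noteq> 0 \<and> le2 b0 i} \<Longrightarrow> le2 b b' \<Longrightarrow> b' = b"
    using exists_max[OF _ ne] S by auto
  have mx: "b' = b" if "b' \<in> S" "c b' \<noteq> 0" "le2 b b'" for b'
    using b that by (auto simp: le2_def)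
  have bad: "\<not> (le2 b a \<and> b \<noteq> a)"
  proof
    assume h: "le2 b a \<and> b \<noteq> a"
    have "le2 b0 a" using h b(1) by (auto simp: le2_def)
    moreover have "b0 \<noteq> a"
    proof
      assume "b0 = a" then have "b = a" using h b(1) by (auto simp: le2_def prod_eq_iff)
      then show False using h by simp
    qed
    ultimately show False using b0(3) by simp
  qed
  have "lcoef (\<Sum>i\<in>S. emb (c i) * F i) (- fst b) (- snd b) = c b"
    by (rule key_max[OF PTF S]) (use b mx in auto)
  moreover have "lcoef (u - F a) (- fst b) (- snd b) = 0"
  proof -
    obtain f g where f: "coeff (coeff f 0) 0 = 1" "u = LR (- fst a) (- snd a) f"
      and g: "coeff (coeff g 0) 0 = 1" "F a = LR (- fst a) (- snd a) g"
      using Pa PTF[of a] unfolding PT_def by blast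
    have "lcoef (u - F a) (- fst b) (- snd b) = icf (f - g) (fst a - fst b) (snd a - snd b)"
      unfolding f g LR_diff lcoef_LR by simp
    also have "\<dots> = 0" using bad f g by (auto simp: icf_def le2_def prod_eq_iff)
    finally show ?thesis .
  qed
  ultimately show False using e b(1) by simp
qed



context setting begin

lemma main:
  fixes xf :: "int \<times> int \<Rightarrow> 'k ratfun"
  assumes inA: "\<And>a. xf a \<in> clalg P1 P2" and pt: "\<And>a. PT (xf a) a"
    and std: "\<And>a. \<not> (0 < fst a \<and> 0 < snd a) \<Longrightarrow> xf a = zz a"
  shows "is_basis (kk P1 P2) (clalg P1 P2) UNIV xf"
proof -
  have sz: "zz a \<in> spn K xf" if "nat (fst a) + nat (snd a) = n" for a n
    using that
  proof (induction n arbitrary: a rule: less_induct)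
    case (less n)
    show ?case
    proof (cases "0 < fst a \<and> 0 < snd a")
      case False then show ?thesis using std[OF False] sgen[of xf a] by simp
    next
      case pos: True
      have "xf a - zz a \<in> spn K zz" using inA clalg_spn sgen[of zz a] by (blast intro: sdiff)
      then obtain S c where S: "finite S" "\<forall>i\<in>S. c i \<in> K" "xf a - zz a = (\<Sum>i\<in>S. emb (c i) * zz i)"
        unfolding spn_def by blast
      have tri: "\<forall>b\<in>S. c b \<noteq> 0 \<longrightarrow> le2 b a \<and> b \<noteq> a"
        by (rule triang[OF PT_zz S(1) pt S(3)])
      have "zz a = xf a - (\<Sum>i\<in>S. emb (c i) * zz i)" using S(3) by simp
      also have "\<dots> \<in> spn K xf"
      proof (rule sdiff[OF sgen], rule ssum)
        fix b assume b: "b \<in> S"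
        show "emb (c b) * zz b \<in> spn K xf"
        proof (cases "c b = 0")
          case True then show ?thesis using spn_0 by simp
        next
          case False
          with tri b have lb: "le2 b a" "b \<noteq> a" by auto
          have "zz b \<in> spn K xf"
          proof (cases "0 < fst b \<and> 0 < snd b")
            case True
            have "nat (fst b) + nat (snd b) < n"
              using lb True pos less.prems by (auto simp: le2_def prod_eq_iff)
            then show ?thesis using less.IH by blast
          next
            case False then show ?thesis using std[OF False] sgen[of xf b] by simp
          qed
          then show ?thesis using ssmul S(2) b by blast
        qed
      qed
      finally show ?thesis .
    qed
  qed
  have sub: "clalg P1 P2 \<subseteq> spn K xf"
    using clalg_spn strans[of zz xf] sz by blast
  show ?thesis unfolding is_basis_def
  proof (intro conjI ballI allI impI)
    show "\<And>i. xf i \<in> clalg P1 P2" by (rule inA)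
  next
    fix y assume "y \<in> clalg P1 P2"
    then have "y \<in> spn K xf" using sub by blast
    then show "\<exists>S c. finite S \<and> S \<subseteq> UNIV \<and> (\<forall>i\<in>S. c i \<in> kk P1 P2) \<and> y = (\<Sum>i\<in>S. emb (c i) * xf i)"
      unfolding spn_def by blast
  next
    fix S c i assume h: "finite S \<and> S \<subseteq> UNIV \<and> (\<forall>i\<in>S. c i \<in> kk P1 P2) \<and> (\<Sum>i\<in>S. emb (c i) * xf i) = 0"
      and i: "i \<in> S"
    show "c i = 0" using indep[OF pt, of S c] h i by blast
  qed
qed

end

theorem proposition2p9:
  fixes P1 P2 :: "'k::linordered_field poly"
    and x :: "int \<times> int \<Rightarrow> 'k ratfun"
  assumes "lead_coeff P1 = 1" and "lead_coeff P2 = 1"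
    and "reflect_poly P1 = P1" and "reflect_poly P2 = P2"
    and "\<forall>i. coeff P1 i \<ge> 0" and "\<forall>i. coeff P2 i \<ge> 0"
    and "\<forall>a1 a2. x (a1, a2) \<in> clalg P1 P2"
    and "\<forall>a1 a2. pointed P1 P2 (x (a1, a2)) a1 a2"
    and "\<forall>a1 a2. \<not> (a1 > 0 \<and> a2 > 0) \<longrightarrow> x (a1, a2) = z1 P1 P2 a1 a2"
  shows "is_basis (kk P1 P2) (clalg P1 P2) UNIV x"
proof -
  interpret setting P1 P2 by (unfold_locales) (use assms in auto)
  show ?thesis
  proof (rule main)
    fix a :: "int \<times> int"
    obtain a1 a2 where a: "a = (a1, a2)" by (cases a)
    show "x a \<in> clalg P1 P2" using assms(7) a by simp
    show "PT (x a) a" using pointed_PT assms(8) a by blast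
    show "\<not> (0 < fst a \<and> 0 < snd a) \<Longrightarrow> x a = zz a" using assms(9) a by (simp add: zz_def)
  qed
qed


end
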